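(* Let $M$ be a countable transitive $\aleph_0$-categorical structure with no algebraicity admitting weak elimination of imaginaries. For all distinct $a,b\in M$ and every $2$-type $\tau$ of pairs of distinct elements, there is $k\in\mathbb N$ such that for every finite $A\subseteq M$ there is an alternating $\tau$-path of length $k$ from $a$ to $b$ whose interior is disjoint from $A$. In particular, there are infinitely many alternating $\tau$-paths of length $k$ between $a$ and $b$ with pairwise disjoint interiors.
   Context: $G=\operatorname{Aut}(M)$; a $2$-type is a $G$-orbit on $M^2$, $\mathrm{tp}(cd)$ being the orbit of $(c,d)$. An alternating $\tau$-path between $a$ and $b$ is a sequence of pairwise distinct elements $y_0,\dots,y_{2n}$ with $y_0=a$, $y_{2n}=b$ and $\mathrm{tp}(y_{2i}y_{2i+1})=\mathrm{tp}(y_{2i+2}y_{2i+1})=\tau$ for all $i<n$; its interior is $\{y_1,\dots,y_{2n-1}\}$. No algebraicity: for finite $A\subseteq M$ all orbits of the pointwise stabilizer $G_A$ on $M\setminus A$ are infinite. Weak elimination of imaginaries: every proper open subgroup $V<G$ contains some $G_{\bar a}$ ($\bar a$ a finite tuple) with finite index. *)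

theory Defs
  imports Main "HOL-Library.Countable_Set"
begin

text \<open>A structure is given by a carrier set M and an interpretation
I :: 'r => 'a list => bool; a relation symbol of the signature is a pair
(r, n) with n the length of the argument list (so relations of every arity
are allowed). Only argument lists with entries in the carrier matter.\<close>

datatype 'r fm =
    Eq nat nat
  | Rel 'r "nat list"
  | Neg "'r fm"
  | Conj "'r fm" "'r fm"
  | Ex nat "'r fm"

fun sat :: "'a set \<Rightarrow> ('r \<Rightarrow> 'a list \<Rightarrow> bool) \<Rightarrow> 'r fm \<Rightarrow> (nat \<Rightarrow> 'a) \<Rightarrow> bool" where
  "sat M I (Eq i j) v = (v i = v j)"
| "sat M I (Rel r xs) v = I r (map v xs)"
| "sat M I (Neg \<phi>) v = (\<not> sat M I \<phi> v)"
| "sat M I (Conj \<phi> \<psi>) v = (sat M I \<phi> v \<and> sat M I \<psi> v)"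
| "sat M I (Ex x \<phi>) v = (\<exists>a\<in>M. sat M I \<phi> (v(x := a)))"

definition models :: "'a set \<Rightarrow> ('r \<Rightarrow> 'a list \<Rightarrow> bool) \<Rightarrow> 'r fm \<Rightarrow> bool" where
  "models M I \<phi> = (\<forall>v. (\<forall>i. v i \<in> M) \<longrightarrow> sat M I \<phi> v)"

definition model_of_theory ::
  "'b set \<Rightarrow> ('r \<Rightarrow> 'b list \<Rightarrow> bool) \<Rightarrow> 'a set \<Rightarrow> ('r \<Rightarrow> 'a list \<Rightarrow> bool) \<Rightarrow> bool" where
  "model_of_theory N J M I = (N \<noteq> {} \<and> (\<forall>\<phi>. models M I \<phi> \<longrightarrow> models N J \<phi>))"

definition iso ::
  "('a \<Rightarrow> 'b) \<Rightarrow> 'a set \<Rightarrow> ('r \<Rightarrow> 'a list \<Rightarrow> bool) \<Rightarrow> 'b set \<Rightarrow> ('r \<Rightarrow> 'b list \<Rightarrow> bool) \<Rightarrow> bool" where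
  "iso f M I N J = (bij_betw f M N \<and>
     (\<forall>r xs. set xs \<subseteq> M \<longrightarrow> (I r xs \<longleftrightarrow> J r (map f xs))))"

text \<open>Countable models are taken, without loss
of generality, with carrier a subset of nat.\<close>
definition aleph0_categorical :: "'a set \<Rightarrow> ('r \<Rightarrow> 'a list \<Rightarrow> bool) \<Rightarrow> bool" where
  "aleph0_categorical M I = (\<forall>(N :: nat set) J. infinite N \<longrightarrow> model_of_theory N J M I
      \<longrightarrow> (\<exists>f. iso f N J M I))"

definition Aut :: "'a set \<Rightarrow> ('r \<Rightarrow> 'a list \<Rightarrow> bool) \<Rightarrow> ('a \<Rightarrow> 'a) set" where
  "Aut M I = {g. iso g M I M I \<and> (\<forall>x. x \<notin> M \<longrightarrow> g x = x)}"

definition stab :: "'a set \<Rightarrow> ('r \<Rightarrow> 'a list \<Rightarrow> bool) \<Rightarrow> 'a set \<Rightarrow> ('a \<Rightarrow> 'a) set" where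
  "stab M I A = {g \<in> Aut M I. \<forall>x\<in>A. g x = x}"

definition transitive_str :: "'a set \<Rightarrow> ('r \<Rightarrow> 'a list \<Rightarrow> bool) \<Rightarrow> bool" where
  "transitive_str M I = (\<forall>a\<in>M. \<forall>b\<in>M. \<exists>g\<in>Aut M I. g a = b)"

definition no_algebraicity :: "'a set \<Rightarrow> ('r \<Rightarrow> 'a list \<Rightarrow> bool) \<Rightarrow> bool" where
  "no_algebraicity M I = (\<forall>A. finite A \<longrightarrow> A \<subseteq> M \<longrightarrow>
      (\<forall>c \<in> M - A. infinite ((\<lambda>g. g c) ` stab M I A)))"

definition subgroup_of :: "('a \<Rightarrow> 'a) set \<Rightarrow> ('a \<Rightarrow> 'a) set \<Rightarrow> bool" where
  "subgroup_of V G = (V \<subseteq> G \<and> id \<in> V \<and> (\<forall>g\<in>V. \<forall>h\<in>V. g \<circ> h \<in> V)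
      \<and> (\<forall>g\<in>V. \<exists>h\<in>V. h \<circ> g = id))"

text \<open>Open subgroups for the topology of pointwise convergence: subgroups
containing the pointwise stabiliser of some finite set.\<close>
definition open_subgroup :: "'a set \<Rightarrow> ('r \<Rightarrow> 'a list \<Rightarrow> bool) \<Rightarrow> ('a \<Rightarrow> 'a) set \<Rightarrow> bool" where
  "open_subgroup M I V = (subgroup_of V (Aut M I) \<and>
      (\<exists>B. finite B \<and> B \<subseteq> M \<and> stab M I B \<subseteq> V))"

definition finite_index :: "('a \<Rightarrow> 'a) set \<Rightarrow> ('a \<Rightarrow> 'a) set \<Rightarrow> bool" where
  "finite_index H V = finite {(\<lambda>g. h \<circ> g) ` H | h. h \<in> V}"

definition weak_EI :: "'a set \<Rightarrow> ('r \<Rightarrow> 'a list \<Rightarrow> bool) \<Rightarrow> bool" where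
  "weak_EI M I = (\<forall>V. open_subgroup M I V \<longrightarrow> V \<noteq> Aut M I \<longrightarrow>
      (\<exists>A. finite A \<and> A \<subseteq> M \<and> stab M I A \<subseteq> V \<and> finite_index (stab M I A) V))"

definition tp :: "'a set \<Rightarrow> ('r \<Rightarrow> 'a list \<Rightarrow> bool) \<Rightarrow> 'a \<Rightarrow> 'a \<Rightarrow> ('a \<times> 'a) set" where
  "tp M I c d = {(g c, g d) | g. g \<in> Aut M I}"

text \<open>An alternating tau-path is the list [y_0, ..., y_{2n}]; its length is
the number of steps 2n (= length of the list minus one).\<close>
definition alt_path :: "'a set \<Rightarrow> ('a \<times> 'a) set \<Rightarrow> 'a \<Rightarrow> 'a \<Rightarrow> 'a list \<Rightarrow> bool" where
  "alt_path M \<tau> a b ys = (odd (length ys) \<and> distinct ys \<and> set ys \<subseteq> M \<and>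
      ys ! 0 = a \<and> ys ! (length ys - 1) = b \<and>
      (\<forall>i. 2 * i + 2 < length ys \<longrightarrow>
          (ys ! (2*i), ys ! (2*i+1)) \<in> \<tau> \<and> (ys ! (2*i+2), ys ! (2*i+1)) \<in> \<tau>))"

definition path_len :: "'a list \<Rightarrow> nat" where
  "path_len ys = length ys - 1"

definition interior :: "'a list \<Rightarrow> 'a set" where
  "interior ys = set (butlast (tl ys))"

end

theory Submission imports Defs begin

lemma id_Aut: "id \<in> Aut M I"
  unfolding Aut_def iso_def by (auto simp: bij_betw_def)

lemma Aut_M: "g \<in> Aut M I \<Longrightarrow> x \<in> M \<Longrightarrow> g x \<in> M"
  unfolding Aut_def iso_def bij_betw_def by auto

lemma Aut_inj: "g \<in> Aut M I \<Longrightarrow> inj_on g M"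
  unfolding Aut_def iso_def bij_betw_def by auto

lemma Aut_comp: assumes "g \<in> Aut M I" "h \<in> Aut M I" shows "g \<circ> h \<in> Aut M I"
proof -
  have bg: "bij_betw g M M" and bh: "bij_betw h M M" using assms unfolding Aut_def iso_def by auto
  have "bij_betw (g \<circ> h) M M" using bij_betw_trans[OF bh bg] .
  moreover have "I r xs = I r (map (g \<circ> h) xs)" if "set xs \<subseteq> M" for r xs
  proof -
    have s: "set (map h xs) \<subseteq> M" using that Aut_M[OF assms(2)] by auto
    have "I r xs = I r (map h xs)" using assms(2) that unfolding Aut_def iso_def by auto
    also have "\<dots> = I r (map g (map h xs))" using assms(1) s unfolding Aut_def iso_def by auto
    finally show ?thesis by simp
  qed
  moreover have "\<forall>x. x \<notin> M \<longrightarrow> (g \<circ> h) x = x" using assms unfolding Aut_def by auto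
  ultimately show ?thesis unfolding Aut_def iso_def by auto
qed

lemma Aut_inv: assumes "g \<in> Aut M I" shows "\<exists>h\<in>Aut M I. h \<circ> g = id"
proof -
  define h where "h = (\<lambda>x. if x \<in> M then inv_into M g x else x)"
  have bg: "bij_betw g M M" using assms unfolding Aut_def iso_def by auto
  have bi: "bij_betw (inv_into M g) M M" using bij_betw_inv_into[OF bg] by (simp add: bij_betw_imp_surj_on[OF bg])
  have bh: "bij_betw h M M" using bi unfolding h_def by (rule bij_betw_cong[THEN iffD1, rotated]) auto
  have hM: "x \<in> M \<Longrightarrow> h x \<in> M" for x using bh bij_betwE by blast
  have gh: "x \<in> M \<Longrightarrow> g (h x) = x" for x unfolding h_def using bg
    by (simp add: bij_betw_imp_surj_on f_inv_into_f)
  have hg: "h \<circ> g = id"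
  proof
    fix x show "(h \<circ> g) x = id x"
    proof (cases "x \<in> M")
      case True then show ?thesis unfolding h_def using bg Aut_M[OF assms True]
        by (simp add: bij_betw_def inv_into_f_f)
    next
      case False then have "g x = x" using assms unfolding Aut_def by auto
      then show ?thesis using False unfolding h_def by simp
    qed
  qed
  have "I r xs = I r (map h xs)" if "set xs \<subseteq> M" for r xs
  proof -
    have s: "set (map h xs) \<subseteq> M" using that hM by auto
    have "I r (map h xs) = I r (map g (map h xs))" using assms s unfolding Aut_def iso_def by auto
    also have "map g (map h xs) = xs" using that gh by (induction xs) auto
    finally show ?thesis by simp
  qed
  then have "h \<in> Aut M I" using bh unfolding Aut_def iso_def h_def by auto
  with hg show ?thesis by blast
qed

lemma tp_inv: "(x, y) \<in> tp M I c d \<Longrightarrow> h \<in> Aut M I \<Longrightarrow> (h x, h y) \<in> tp M I c d"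
proof -
  assume "(x, y) \<in> tp M I c d" "h \<in> Aut M I"
  then obtain g where "g \<in> Aut M I" "x = g c" "y = g d" unfolding tp_def by auto
  then show ?thesis unfolding tp_def using Aut_comp[OF \<open>h \<in> Aut M I\<close> \<open>g \<in> Aut M I\<close>]
    by (metis (mono_tags, lifting) comp_apply mem_Collect_eq)
qed

lemma move_away:
  assumes na: "no_algebraicity M I" and F: "finite F" "F \<subseteq> M"
    and X: "finite X" "X \<subseteq> M - F" and Y: "finite Y"
  shows "\<exists>g\<in>stab M I F. g ` X \<inter> Y = {}"
  using X
proof (induction X rule: finite_induct)
  case empty
  have "id \<in> stab M I F" using id_Aut unfolding stab_def by auto
  then show ?case by blast
next
  case (insert x X)
  then obtain g1 where g1: "g1 \<in> stab M I F" "g1 ` X \<inter> Y = {}" by auto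
  have g1A: "g1 \<in> Aut M I" using g1 unfolding stab_def by auto
  let ?F = "F \<union> g1 ` X"
  have fF: "finite ?F" using F insert by auto
  have FM: "?F \<subseteq> M" using F insert Aut_M[OF g1A] by auto
  have xM: "x \<in> M" "x \<notin> F" using insert by auto
  have "g1 x \<in> M" using Aut_M[OF g1A xM(1)] .
  moreover have "g1 x \<notin> F"
  proof
    assume "g1 x \<in> F"
    then have "g1 (g1 x) = g1 x" using g1 unfolding stab_def by auto
    then have "g1 x = x" using Aut_inj[OF g1A] \<open>g1 x \<in> M\<close> xM inj_onD by metis
    with \<open>g1 x \<in> F\<close> xM show False by simp
  qed
  moreover have "g1 x \<notin> g1 ` X"
    using Aut_inj[OF g1A] insert xM by (auto simp: inj_on_def)
  ultimately have "g1 x \<in> M - ?F" by auto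
  then have inf: "infinite ((\<lambda>g. g (g1 x)) ` stab M I ?F)" using na fF FM unfolding no_algebraicity_def by blast
  then obtain g2 where g2: "g2 \<in> stab M I ?F" "g2 (g1 x) \<notin> Y"
    using Y by (metis (no_types, lifting) finite_subset image_subset_iff subsetI)
  have "g2 \<circ> g1 \<in> stab M I F" using g1 g2 Aut_comp unfolding stab_def by auto
  moreover have "(g2 \<circ> g1) ` insert x X \<inter> Y = {}" using g1 g2 unfolding stab_def by auto
  ultimately show ?case by blast
qed

definition altc :: "('a \<times> 'a) set \<Rightarrow> 'a list \<Rightarrow> bool" where
  "altc \<tau> ys = (\<forall>j. Suc j < length ys \<longrightarrow>
     (if even j then (ys!j, ys!Suc j) else (ys!Suc j, ys!j)) \<in> \<tau>)"

lemma alt_path_altc: "alt_path M \<tau> a b ys \<longleftrightarrow> (odd (length ys) \<and> distinct ys \<and> set ys \<subseteq> M \<and>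
      ys ! 0 = a \<and> ys ! (length ys - 1) = b \<and> altc \<tau> ys)"
proof -
  have "(\<forall>i. 2 * i + 2 < length ys \<longrightarrow>
          (ys ! (2*i), ys ! (2*i+1)) \<in> \<tau> \<and> (ys ! (2*i+2), ys ! (2*i+1)) \<in> \<tau>) \<longleftrightarrow> altc \<tau> ys"
    if o: "odd (length ys)"
  proof
    assume H: "\<forall>i. 2 * i + 2 < length ys \<longrightarrow>
          (ys ! (2*i), ys ! (2*i+1)) \<in> \<tau> \<and> (ys ! (2*i+2), ys ! (2*i+1)) \<in> \<tau>"
    show "altc \<tau> ys" unfolding altc_def
    proof (intro allI impI)
      fix j assume j: "Suc j < length ys"
      show "(if even j then (ys!j, ys!Suc j) else (ys!Suc j, ys!j)) \<in> \<tau>"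
      proof (cases "even j")
        case True
        then obtain i where i: "j = 2*i" by blast
        have "2*i+2 \<noteq> length ys" using o by presburger
        then have "2*i+2 < length ys" using j i by auto
        then show ?thesis using H True i by auto
      next
        case False
        then obtain i where i: "j = 2*i+1" using oddE by blast
        then have "2*i+2 < length ys" using j by auto
        then show ?thesis using H False i by (auto simp: numeral_2_eq_2)
      qed
    qed
  next
    assume A: "altc \<tau> ys"
    show "\<forall>i. 2 * i + 2 < length ys \<longrightarrow>
          (ys ! (2*i), ys ! (2*i+1)) \<in> \<tau> \<and> (ys ! (2*i+2), ys ! (2*i+1)) \<in> \<tau>"
    proof (intro allI impI conjI)
      fix i assume i: "2*i+2 < length ys"
      have h1: "Suc (2*i) < length ys" using i by simp
      have "(if even (2*i) then (ys!(2*i), ys!Suc (2*i)) else (ys!Suc (2*i), ys!(2*i))) \<in> \<tau>"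
        using A h1 unfolding altc_def by blast
      then show "(ys ! (2*i), ys ! (2*i+1)) \<in> \<tau>" by simp
      have h2: "Suc (2*i+1) < length ys" using i by simp
      have "(if even (2*i+1) then (ys!(2*i+1), ys!Suc (2*i+1)) else (ys!Suc (2*i+1), ys!(2*i+1))) \<in> \<tau>"
        using A h2 unfolding altc_def by blast
      note X = this
      have o1: "\<not> even (2*i+1)" by simp
      have e: "Suc (2*i+1) = 2*i+2" by simp
      show "(ys ! (2*i+2), ys ! (2*i+1)) \<in> \<tau>" using X[unfolded if_not_P[OF o1] e] .
    qed
  qed
  then show ?thesis unfolding alt_path_def by blast
qed

lemma alt_len: assumes "alt_path M \<tau> a b ys" "a \<noteq> b" shows "length ys \<ge> 3"
proof -
  have o: "odd (length ys)" using assms unfolding alt_path_def by auto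
  have "length ys \<noteq> 1" using assms unfolding alt_path_def by auto
  obtain k where k: "length ys = 2*k+1" using o oddE by blast
  with \<open>length ys \<noteq> 1\<close> show ?thesis by simp
qed

lemma decomp: assumes "length ys \<ge> 2"
  shows "ys = ys!0 # butlast (tl ys) @ [ys!(length ys - 1)]"
  using assms
proof (cases ys)
  case (Cons x xs)
  then have "xs \<noteq> []" using assms by auto
  then have "xs = butlast xs @ [last xs]" by simp
  moreover have "last xs = ys!(length ys - 1)" using Cons \<open>xs \<noteq> []\<close> by (simp add: last_conv_nth)
  ultimately show ?thesis using Cons by simp
qed (use assms in auto)

lemma interior_sub: assumes "alt_path M \<tau> a b ys" "a \<noteq> b"
  shows "interior ys \<subseteq> M - {a, b}" "interior ys \<noteq> {}" "finite (interior ys)"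
    "set ys = insert a (insert b (interior ys))" "set (butlast ys) = insert a (interior ys)"
proof -
  have l: "length ys \<ge> 3" using alt_len[OF assms] .
  have d: "ys = a # butlast (tl ys) @ [b]" using decomp[of ys] l assms unfolding alt_path_def by auto
  have "distinct ys" "set ys \<subseteq> M" using assms unfolding alt_path_def by auto
  then show "interior ys \<subseteq> M - {a, b}" unfolding interior_def
    by (subst (asm) (1 2) d) auto
  have L: "length (butlast (tl ys)) \<ge> 1" using l unfolding interior_def by simp
  have "butlast (tl ys) \<noteq> []"
  proof
    assume E: "butlast (tl ys) = []"
    from L show False unfolding E by simp
  qed
  then show "interior ys \<noteq> {}" unfolding interior_def by simp
  show "finite (interior ys)" unfolding interior_def by simp
  show "set ys = insert a (insert b (interior ys))" unfolding interior_def by (subst d) auto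
  show "set (butlast ys) = insert a (interior ys)" unfolding interior_def by (subst d) (simp add: butlast_append)
qed

lemma interior_map: "interior (map g ys) = g ` interior ys"
  unfolding interior_def by (simp add: map_butlast[symmetric] map_tl[symmetric])

lemma alt_map: assumes "alt_path M \<tau> a b ys" "g \<in> Aut M I"
    and inv: "\<And>x y. (x, y) \<in> \<tau> \<Longrightarrow> (g x, g y) \<in> \<tau>"
  shows "alt_path M \<tau> (g a) (g b) (map g ys)"
proof -
  have A: "odd (length ys)" "distinct ys" "set ys \<subseteq> M" "ys ! 0 = a" "ys ! (length ys - 1) = b" "altc \<tau> ys"
    using assms(1) alt_path_altc by metis+
  have p: "length ys > 0" using A(1) by (cases ys) auto
  have "distinct (map g ys)" using A(2,3) Aut_inj[OF assms(2)] by (simp add: distinct_map inj_on_subset)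
  moreover have "set (map g ys) \<subseteq> M" using A(3) Aut_M[OF assms(2)] by auto
  moreover have "altc \<tau> (map g ys)" using A(6) inv unfolding altc_def by (auto split: if_splits)
  ultimately show ?thesis unfolding alt_path_altc using A p by auto
qed

lemma alt_rev: assumes "alt_path M \<tau> a b ys" shows "alt_path M \<tau> b a (rev ys)"
proof -
  have A: "odd (length ys)" "distinct ys" "set ys \<subseteq> M" "ys ! 0 = a" "ys ! (length ys - 1) = b" "altc \<tau> ys"
    using assms(1) alt_path_altc by metis+
  obtain m where m: "length ys = 2*m+1" using A(1) oddE by blast
  have "altc \<tau> (rev ys)" unfolding altc_def
  proof (intro allI impI)
    fix j assume j: "Suc j < length (rev ys)"
    define j' where "j' = 2*m - 1 - j"
    have e: "Suc j' = length ys - Suc j" using j m unfolding j'_def by simp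
    have r1: "rev ys ! j = ys ! Suc j'" using j unfolding e by (simp add: rev_nth)
    have r2: "rev ys ! Suc j = ys ! j'" using j m unfolding j'_def by (simp add: rev_nth)
    have sj: "Suc j' < length ys" using j m unfolding j'_def by auto
    have par: "even j \<longleftrightarrow> odd j'" using j m unfolding j'_def by (auto simp: even_diff_nat)
    show "(if even j then (rev ys!j, rev ys!Suc j) else (rev ys!Suc j, rev ys!j)) \<in> \<tau>"
      using A(6) sj par unfolding altc_def r1 r2 by (metis (full_types))
  qed
  moreover have "rev ys ! 0 = b" "rev ys ! (length ys - 1) = a" using A m by (auto simp: rev_nth)
  ultimately show ?thesis unfolding alt_path_altc using A by auto
qed

lemma alt_concat: assumes p1: "alt_path M \<tau> x y ys1" and p2: "alt_path M \<tau> y z zs"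
  and xy: "x \<noteq> y" and dj: "set (butlast ys1) \<inter> set zs = {}"
  shows "alt_path M \<tau> x z (butlast ys1 @ zs)"
proof -
  have A: "odd (length ys1)" "distinct ys1" "set ys1 \<subseteq> M" "ys1 ! 0 = x" "ys1 ! (length ys1 - 1) = y" "altc \<tau> ys1"
    using p1 alt_path_altc by metis+
  have B: "odd (length zs)" "distinct zs" "set zs \<subseteq> M" "zs ! 0 = y" "zs ! (length zs - 1) = z" "altc \<tau> zs"
    using p2 alt_path_altc by metis+
  have l1: "length ys1 \<ge> 3" using alt_len[OF p1 xy] .
  obtain m where m: "length ys1 = 2*m+1" using A(1) oddE by blast
  have lb: "length (butlast ys1) = 2*m" using m by simp
  have zp: "length zs > 0" using B(1) by (cases zs) auto
  let ?c = "butlast ys1 @ zs"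
  have nth1: "?c ! j = ys1 ! j" if "j \<le> 2*m" for j
  proof (cases "j < 2*m")
    case True then show ?thesis using lb by (simp add: nth_append nth_butlast)
  next
    case False then have "j = 2*m" using that by simp
    then show ?thesis using lb A(5) B(4) m by (simp add: nth_append)
  qed
  have nth2: "?c ! j = zs ! (j - 2*m)" if "j \<ge> 2*m" for j using that lb by (simp add: nth_append)
  have "altc \<tau> ?c" unfolding altc_def
  proof (intro allI impI)
    fix j assume j: "Suc j < length ?c"
    show "(if even j then (?c!j, ?c!Suc j) else (?c!Suc j, ?c!j)) \<in> \<tau>"
    proof (cases "j < 2*m")
      case True
      then have "Suc j < length ys1" using m by simp
      then show ?thesis using A(6) True nth1[of j] nth1[of "Suc j"] unfolding altc_def by auto
    next
      case False
      then have e: "Suc (j - 2*m) = Suc j - 2*m" by simp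
      have s: "Suc (j - 2*m) < length zs" using j lb False by simp
      have par: "even j \<longleftrightarrow> even (j - 2*m)" using False by (simp add: even_diff_nat)
      show ?thesis using B(6) s par nth2[of j] nth2[of "Suc j"] False e unfolding altc_def
        by (metis (full_types) le_SucI not_less)
    qed
  qed
  moreover have "distinct ?c" using A(2) B(2) dj by (simp add: distinct_butlast)
  moreover have "set ?c \<subseteq> M" using A(3) B(3) by (auto dest: in_set_butlastD)
  moreover have "odd (length ?c)" using lb B(1) by simp
  moreover have "?c ! 0 = x" using nth1[of 0] A(4) by simp
  moreover have "?c ! (length ?c - 1) = z"
  proof -
    have "length ?c = 2*m + length zs" using lb by simp
    then have "length ?c - 1 = 2*m + (length zs - 1)" using zp by linarith
    then show ?thesis using lb B(5) by (simp add: nth_append)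
  qed
  ultimately show ?thesis unfolding alt_path_altc by auto
qed

lemma infinite_family:
  assumes H: "\<forall>A. finite A \<longrightarrow> A \<subseteq> M \<longrightarrow> (\<exists>ys. Q ys \<and> interior ys \<inter> A = {})"
    and Q: "\<And>ys. Q ys \<Longrightarrow> interior ys \<subseteq> M \<and> interior ys \<noteq> {} \<and> finite (interior ys)"
  shows "\<exists>P. infinite P \<and> (\<forall>ys\<in>P. Q ys) \<and> (\<forall>ys\<in>P. \<forall>zs\<in>P. ys \<noteq> zs \<longrightarrow> interior ys \<inter> interior zs = {})"
proof -
  define ch where "ch A = (SOME ys. Q ys \<and> interior ys \<inter> A = {})" for A
  have ch: "Q (ch A) \<and> interior (ch A) \<inter> A = {}" if "finite A" "A \<subseteq> M" for A
  proof -
    have "\<exists>ys. Q ys \<and> interior ys \<inter> A = {}" using H that by blast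
    then show ?thesis unfolding ch_def by (rule someI_ex)
  qed
  define U where "U = rec_nat {} (\<lambda>n B. B \<union> interior (ch B))"
  have U0: "U 0 = {}" and US: "U (Suc n) = U n \<union> interior (ch (U n))" for n unfolding U_def by simp_all
  have UM: "finite (U n) \<and> U n \<subseteq> M" for n
  proof (induction n)
    case 0 then show ?case by (simp add: U0)
  next
    case (Suc n)
    then have "Q (ch (U n))" using ch by blast
    then show ?case using Suc Q[of "ch (U n)"] by (simp add: US)
  qed
  define f where "f n = ch (U n)" for n
  have fQ: "Q (f n)" and fd: "interior (f n) \<inter> U n = {}" for n using ch UM unfolding f_def by blast+
  have mono: "U m \<subseteq> U n" if "m \<le> n" for m n
    using that by (induction n) (auto simp: US le_Suc_eq)
  have sub: "interior (f m) \<subseteq> U n" if "m < n" for m n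
    using mono[of "Suc m" n] that US[of m] unfolding f_def by auto
  have dis: "interior (f m) \<inter> interior (f n) = {}" if "m \<noteq> n" for m n
  proof (cases "m < n")
    case True then show ?thesis using sub[OF True] fd[of n] by blast
  next
    case False then have "n < m" using that by simp
    then show ?thesis using sub[of n m] fd[of m] by blast
  qed
  have "inj f"
  proof
    fix m n assume "f m = f n"
    show "m = n"
    proof (rule ccontr)
      assume "m \<noteq> n"
      then have "interior (f m) = {}" using dis[of m n] \<open>f m = f n\<close> by simp
      then show False using Q[OF fQ[of m]] by simp
    qed
  qed
  then have "infinite (range f)" using range_inj_infinite by blast
  moreover have "\<forall>ys\<in>range f. Q ys" using fQ by auto
  moreover have "\<forall>ys\<in>range f. \<forall>zs\<in>range f. ys \<noteq> zs \<longrightarrow> interior ys \<inter> interior zs = {}"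
    using dis by (metis (no_types, lifting) imageE)
  ultimately show ?thesis by blast
qed

theorem mainTheorem12:
  fixes M :: "'a set" and I :: "'r \<Rightarrow> 'a list \<Rightarrow> bool"
    and a b :: 'a and \<tau> :: "('a \<times> 'a) set"
  assumes "countable M"
    and "transitive_str M I"
    and "aleph0_categorical M I"
    and "no_algebraicity M I"
    and "weak_EI M I"
    and "a \<in> M" and "b \<in> M" and "a \<noteq> b"
    and "\<exists>c\<in>M. \<exists>d\<in>M. c \<noteq> d \<and> \<tau> = tp M I c d"
  shows "\<exists>k::nat.
     (\<forall>A. finite A \<longrightarrow> A \<subseteq> M \<longrightarrow>
        (\<exists>ys. alt_path M \<tau> a b ys \<and> path_len ys = k \<and> interior ys \<inter> A = {}))
   \<and> (\<exists>P. infinite P \<and> (\<forall>ys\<in>P. alt_path M \<tau> a b ys \<and> path_len ys = k)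
        \<and> (\<forall>ys\<in>P. \<forall>zs\<in>P. ys \<noteq> zs \<longrightarrow> interior ys \<inter> interior zs = {}))"
proof -
  have na: "no_algebraicity M I" using assms(4) .
  obtain c d where cd: "c \<in> M" "d \<in> M" "c \<noteq> d" "\<tau> = tp M I c d" using assms(9) by blast
  have inv: "(h x, h y) \<in> \<tau>" if "(x, y) \<in> \<tau>" "h \<in> Aut M I" for x y h
    using tp_inv that cd(4) by metis
  have pM: "set ys \<subseteq> M" if "alt_path M \<tau> x y ys" for x y ys using that unfolding alt_path_def by auto
  have pmap: "alt_path M \<tau> (g x) (g y) (map g ys)" if "alt_path M \<tau> x y ys" "g \<in> Aut M I" for x y ys g
    using alt_map[OF that] inv that(2) by blast
  define R where "R x y \<longleftrightarrow> x = y \<or> (\<exists>ys. alt_path M \<tau> x y ys)" for x y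
  have Rsym: "R x y \<Longrightarrow> R y x" for x y unfolding R_def using alt_rev by metis
  have Rmap: "R x y \<Longrightarrow> g \<in> Aut M I \<Longrightarrow> R (g x) (g y)" for x y g unfolding R_def using pmap by metis
  have Rtrans: "R x z" if xy: "R x y" and yz: "R y z" for x y z
  proof (cases "x = y \<or> y = z \<or> x = z")
    case True then show ?thesis using xy yz unfolding R_def by auto
  next
    case False
    then have ne: "x \<noteq> y" "y \<noteq> z" "x \<noteq> z" by auto
    obtain p1 where p1: "alt_path M \<tau> x y p1" using xy ne unfolding R_def by auto
    obtain p2 where p2: "alt_path M \<tau> y z p2" using yz ne unfolding R_def by auto
    note i1 = interior_sub[OF p1 ne(1)] and i2 = interior_sub[OF p2 ne(2)]
    have xyzM: "x \<in> M" "y \<in> M" "z \<in> M" using pM[OF p1] pM[OF p2] i1(4) i2(4) by auto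
    obtain g where g: "g \<in> stab M I {y,z}" "g ` interior p2 \<inter> set p1 = {}"
      using move_away[OF na, of "{y,z}" "interior p2" "set p1"] i2 xyzM by auto
    have gA: "g \<in> Aut M I" and gy: "g y = y" and gz: "g z = z" using g(1) unfolding stab_def by auto
    define q2 where "q2 = map g p2"
    have q2: "alt_path M \<tau> y z q2" using pmap[OF p2 gA] gy gz unfolding q2_def by simp
    have iq2: "interior q2 \<inter> set p1 = {}" using g(2) unfolding q2_def interior_map .
    obtain g' where g': "g' \<in> stab M I {x,y}" "g' ` interior p1 \<inter> set q2 = {}"
      using move_away[OF na, of "{x,y}" "interior p1" "set q2"] i1 xyzM by auto
    have gA': "g' \<in> Aut M I" and gx': "g' x = x" and gy': "g' y = y" using g'(1) unfolding stab_def by auto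
    define q1 where "q1 = map g' p1"
    have q1: "alt_path M \<tau> x y q1" using pmap[OF p1 gA'] gx' gy' unfolding q1_def by simp
    have iq1: "interior q1 \<inter> set q2 = {}" using g'(2) unfolding q1_def interior_map .
    have b1: "set (butlast q1) = insert x (interior q1)" using interior_sub(5)[OF q1 ne(1)] .
    have s2: "set q2 = insert y (insert z (interior q2))" using interior_sub(4)[OF q2 ne(2)] .
    have "x \<in> set p1" using i1(4) by simp
    then have "x \<notin> interior q2" using iq2 by blast
    then have "set (butlast q1) \<inter> set q2 = {}" using b1 s2 iq1 ne by auto
    then show ?thesis using alt_concat[OF q1 q2 ne(1)] unfolding R_def by blast
  qed
  obtain g0 where g0: "g0 \<in> Aut M I" "g0 c = a"
    using assms(2) cd assms(6) unfolding transitive_str_def by blast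
  define d' where "d' = g0 d"
  have d'M: "d' \<in> M" using Aut_M[OF g0(1) cd(2)] unfolding d'_def .
  have d'a: "d' \<noteq> a" using Aut_inj[OF g0(1)] cd g0(2) unfolding d'_def inj_on_def by metis
  have "infinite ((\<lambda>g. g a) ` stab M I {d'})" using na d'M assms(6) d'a unfolding no_algebraicity_def by auto
  then obtain h where h: "h \<in> stab M I {d'}" "h a \<notin> {a, d'}"
    by (metis (no_types, lifting) finite.emptyI finite.insertI finite_subset image_subset_iff subsetI)
  define e where "e = h a"
  have hA: "h \<in> Aut M I" and hd: "h d' = d'" using h unfolding stab_def by auto
  have eM: "e \<in> M" using Aut_M[OF hA assms(6)] unfolding e_def .
  have ad: "(a, d') \<in> \<tau>" using g0 cd(4) unfolding tp_def d'_def by blast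
  have ed: "(e, d') \<in> \<tau>" using inv[OF ad hA] hd unfolding e_def by simp
  have ea: "e \<noteq> a" "e \<noteq> d'" using h(2) unfolding e_def by auto
  have pe: "alt_path M \<tau> a e [a, d', e]" unfolding alt_path_def
  proof (intro conjI allI impI)
    fix i assume "2 * i + 2 < length [a, d', e]"
    then have "i = 0" by simp
    then show "([a, d', e] ! (2*i), [a, d', e] ! (2*i+1)) \<in> \<tau>" "([a, d', e] ! (2*i+2), [a, d', e] ! (2*i+1)) \<in> \<tau>"
      using ad ed by simp_all
  qed (use d'a ea eM d'M assms(6) in auto)
  have Rae: "R a e" using pe unfolding R_def by blast
  define V where "V = {g \<in> Aut M I. R (g a) a}"
  have stabV: "stab M I {y} \<subseteq> V" if "R a y" for y
  proof
    fix g assume g: "g \<in> stab M I {y}"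
    then have gA: "g \<in> Aut M I" and gy: "g y = y" unfolding stab_def by auto
    have "R (g a) y" using Rmap[OF that gA] gy by simp
    then have "R (g a) a" using Rtrans Rsym[OF that] by blast
    then show "g \<in> V" using gA unfolding V_def by simp
  qed
  have Vcomp: "g \<circ> h \<in> V" if "g \<in> V" "h \<in> V" for g h
  proof -
    have gA: "g \<in> Aut M I" "R (g a) a" and hA: "h \<in> Aut M I" "R (h a) a" using that unfolding V_def by auto
    have "R (g (h a)) (g a)" using Rmap[OF hA(2) gA(1)] .
    then have "R (g (h a)) a" using Rtrans gA(2) by blast
    then show ?thesis using Aut_comp[OF gA(1) hA(1)] unfolding V_def by simp
  qed
  have sg: "subgroup_of V (Aut M I)" unfolding subgroup_of_def
  proof (intro conjI ballI)
    show "V \<subseteq> Aut M I" unfolding V_def by auto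
    show "id \<in> V" using id_Aut unfolding V_def R_def by simp
    show "g \<circ> h \<in> V" if "g \<in> V" "h \<in> V" for g h using Vcomp that .
    fix g assume "g \<in> V"
    then have gA: "g \<in> Aut M I" "R (g a) a" unfolding V_def by auto
    obtain k where k: "k \<in> Aut M I" "k \<circ> g = id" using Aut_inv[OF gA(1)] by blast
    have kg: "k (g a) = a" using fun_cong[OF k(2), of a] by simp
    have "R a (k a)" using Rmap[OF gA(2) k(1)] kg by simp
    then have "k \<in> V" using k(1) Rsym unfolding V_def by simp
    then show "\<exists>h\<in>V. h \<circ> g = id" using k(2) by blast
  qed
  have Raa: "R a a" unfolding R_def by simp
  have op: "open_subgroup M I V" unfolding open_subgroup_def
    using sg stabV[OF Raa] assms(6) by blast
  have VA: "V = Aut M I"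
  proof (rule ccontr)
    assume ne: "V \<noteq> Aut M I"
    obtain A where A: "finite A" "A \<subseteq> M" "stab M I A \<subseteq> V" "finite_index (stab M I A) V"
      using assms(5) op ne unfolding weak_EI_def by blast
    let ?H = "stab M I A"
    define S where "S = (\<Union>h\<in>V. h ` A)"
    define F where "F K = (\<Union>k\<in>K. k ` A)" for K :: "('a \<Rightarrow> 'a) set"
    have idH: "id \<in> ?H" using id_Aut unfolding stab_def by auto
    have Fc: "F ((\<lambda>g. h \<circ> g) ` ?H) = h ` A" for h
    proof -
      have "(h \<circ> g) ` A = h ` A" if "g \<in> ?H" for g
      proof -
        have "g ` A = A" using that unfolding stab_def by force
        then show ?thesis by (metis image_comp)
      qed
      then show ?thesis unfolding F_def using idH by auto
    qed
    let ?C = "{(\<lambda>g. h \<circ> g) ` ?H | h. h \<in> V}"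
    have fC: "finite ?C" using A(4) unfolding finite_index_def .
    have C_eq: "?C = (\<lambda>h. (\<lambda>g. h \<circ> g) ` ?H) ` V" by blast
    have FC: "F ` ?C = (\<lambda>h. h ` A) ` V" unfolding C_eq image_image Fc ..
    have SC: "S = \<Union> (F ` ?C)" unfolding FC S_def ..
    have f2: "finite ((\<lambda>h. h ` A) ` V)" using fC unfolding FC[symmetric] by (rule finite_imageI)
    have f3: "\<forall>K \<in> (\<lambda>h. h ` A) ` V. finite K" using A(1) by blast
    have Sfin: "finite S" unfolding SC FC using finite_Union[OF f2] f3 by blast
    have idV: "id \<in> V" using sg unfolding subgroup_of_def by blast
    have "id ` A \<subseteq> S" unfolding S_def using idV by (rule UN_upper)
    then have AS: "A \<subseteq> S" by simp
    have key: "S \<subseteq> {y}" if yM: "y \<in> M" and sy: "stab M I {y} \<subseteq> V" for y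
    proof
      fix s assume sS: "s \<in> S"
      show "s \<in> {y}"
      proof (rule ccontr)
        assume sy': "s \<notin> {y}"
        obtain k w where kw: "k \<in> V" "w \<in> A" "s = k w" using sS unfolding S_def by auto
        have kA: "k \<in> Aut M I" using kw(1) unfolding V_def by auto
        have sM: "s \<in> M" using Aut_M[OF kA] kw A(2) by auto
        have "(\<lambda>g. g s) ` stab M I {y} \<subseteq> S"
        proof
          fix t assume "t \<in> (\<lambda>g. g s) ` stab M I {y}"
          then obtain g where g: "g \<in> stab M I {y}" "t = g s" by auto
          have "g \<circ> k \<in> V" using Vcomp sy g(1) kw(1) by blast
          moreover have "t = (g \<circ> k) w" using g(2) kw(3) by simp
          ultimately show "t \<in> S" unfolding S_def using kw(2) by blast
        qed
        moreover have "infinite ((\<lambda>g. g s) ` stab M I {y})"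
          using na yM sM sy' unfolding no_algebraicity_def by auto
        ultimately show False using Sfin finite_subset by blast
      qed
    qed
    have "A \<subseteq> {a}" using key[OF assms(6) stabV[OF Raa]] AS by (rule order_trans[rotated])
    moreover have "A \<subseteq> {e}" using key[OF eM stabV[OF Rae]] AS by (rule order_trans[rotated])
    ultimately have "A = {}" using ea(1) by auto
    then have "stab M I A = Aut M I" unfolding stab_def by simp
    then have "Aut M I \<subseteq> V" using A(3) by simp
    moreover have "V \<subseteq> Aut M I" unfolding V_def by auto
    ultimately show False using ne by simp
  qed
  obtain gb where gb: "gb \<in> Aut M I" "gb a = b"
    using assms(2) assms(6,7) unfolding transitive_str_def by blast
  have "gb \<in> V" using gb(1) VA by simp
  then have "R b a" using gb(2) unfolding V_def by simp
  then have "R a b" by (rule Rsym)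
  then obtain ys0 where ys0: "alt_path M \<tau> a b ys0" using assms(8) unfolding R_def by blast
  note i0 = interior_sub[OF ys0 assms(8)]
  define k where "k = path_len ys0"
  have part1: "\<forall>A. finite A \<longrightarrow> A \<subseteq> M \<longrightarrow>
        (\<exists>ys. (alt_path M \<tau> a b ys \<and> path_len ys = k) \<and> interior ys \<inter> A = {})"
  proof (intro allI impI)
    fix A :: "'a set" assume A: "finite A" "A \<subseteq> M"
    obtain g where g: "g \<in> stab M I {a,b}" "g ` interior ys0 \<inter> A = {}"
      using move_away[OF na, of "{a,b}" "interior ys0" A] i0 assms(6,7) A by auto
    have gA: "g \<in> Aut M I" and ga: "g a = a" and gb': "g b = b" using g(1) unfolding stab_def by auto
    have "alt_path M \<tau> a b (map g ys0)" using pmap[OF ys0 gA] ga gb' by simp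
    moreover have "path_len (map g ys0) = k" unfolding k_def path_len_def by simp
    moreover have "interior (map g ys0) \<inter> A = {}" using g(2) by (simp add: interior_map)
    ultimately show "\<exists>ys. (alt_path M \<tau> a b ys \<and> path_len ys = k) \<and> interior ys \<inter> A = {}" by blast
  qed
  have part2: "\<exists>P. infinite P \<and> (\<forall>ys\<in>P. alt_path M \<tau> a b ys \<and> path_len ys = k)
        \<and> (\<forall>ys\<in>P. \<forall>zs\<in>P. ys \<noteq> zs \<longrightarrow> interior ys \<inter> interior zs = {})"
  proof (rule infinite_family[OF part1])
    fix ys assume "alt_path M \<tau> a b ys \<and> path_len ys = k"
    then have "alt_path M \<tau> a b ys" by simp
    note q = interior_sub[OF this assms(8)]
    show "interior ys \<subseteq> M \<and> interior ys \<noteq> {} \<and> finite (interior ys)" using q(1,2,3) by blast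
  qed
  have p1': "\<forall>A. finite A \<longrightarrow> A \<subseteq> M \<longrightarrow>
        (\<exists>ys. alt_path M \<tau> a b ys \<and> path_len ys = k \<and> interior ys \<inter> A = {})"
    using part1 by (simp only: conj_assoc)
  show ?thesis by (rule exI[of _ k], rule conjI[OF p1' part2])
qed

end
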